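(* Let $p$ be a real polynomial in variables $x_1,\ldots,x_k$, and let $M$ be $100\deg(p)$ times the sum of the absolute values of the coefficients of $p$. Define $q \in \mathbb{R}[x_1,\ldots,x_k,y_1,\ldots,y_k]$ by $$q := p \prod_{i=1}^k (1-x_i)^6 + M \left(\sum_{i=1}^k \big(y_i - g(x_i)\big)\right).$$ Then the following are equivalent: (a) $q(x_1,\ldots,x_k,y_1,\ldots,y_k) < 0$ for some real $x_1,\ldots,x_k,y_1,\ldots,y_k$ with $(x_i,y_i) \in R$ for every $1 \leq i \leq k$; (b) $p(x_1,\ldots,x_k)<0$ for some $x_1,\ldots,x_k \in \{1-1/n : n \in \mathbb{N}\}$.
   Context: $g(x):=2x^2-x$. $L:[0,1)\to\mathbb{R}$ is the continuous piecewise linear function which, for every positive integer $t$, on the interval $[1-\frac1t,1-\frac1{t+1}]$ is given by $L(x)=\frac{3t^2-t-2}{t(t+1)}x-\frac{2(t-1)}{t+1}$ (the linear function agreeing with $g$ at the endpoints of that interval). $R:=\{(x,y)\in[0,1]^2: y\ge L(x)\}$ (where $x$ ranges over the domain $[0,1)$ of $L$). $\mathbb{N}=\{1,2,3,\ldots\}$. *)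

theory Defs
  imports Complex_Main
begin

text \<open>A real polynomial in variables x_0..x_{k-1} is represented by its coefficient
  function on exponent vectors (monomials) m :: nat => nat, with finite support and
  only the first k variables occurring.\<close>

definition coeff_supp :: "((nat \<Rightarrow> nat) \<Rightarrow> real) \<Rightarrow> (nat \<Rightarrow> nat) set" where
  "coeff_supp c = {m. c m \<noteq> 0}"

definition is_mpoly :: "nat \<Rightarrow> ((nat \<Rightarrow> nat) \<Rightarrow> real) \<Rightarrow> bool" where
  "is_mpoly k c \<longleftrightarrow> finite (coeff_supp c) \<and> (\<forall>m\<in>coeff_supp c. \<forall>i\<ge>k. m i = 0)"

definition mpoly_eval :: "nat \<Rightarrow> ((nat \<Rightarrow> nat) \<Rightarrow> real) \<Rightarrow> (nat \<Rightarrow> real) \<Rightarrow> real" where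
  "mpoly_eval k c x = (\<Sum>m\<in>coeff_supp c. c m * (\<Prod>i<k. x i ^ m i))"

definition mpoly_deg :: "nat \<Rightarrow> ((nat \<Rightarrow> nat) \<Rightarrow> real) \<Rightarrow> nat" where
  "mpoly_deg k c = Max (insert 0 ((\<lambda>m. \<Sum>i<k. m i) ` coeff_supp c))"

definition coeff_abs_sum :: "((nat \<Rightarrow> nat) \<Rightarrow> real) \<Rightarrow> real" where
  "coeff_abs_sum c = (\<Sum>m\<in>coeff_supp c. \<bar>c m\<bar>)"

definition g :: "real \<Rightarrow> real" where
  "g x = 2 * x^2 - x"

text \<open>L on [0,1): on [1-1/t, 1-1/(t+1)] (t positive integer) it is the given linear
  function; t = floor (1/(1-x)) selects such an interval containing x.\<close>
definition L :: "real \<Rightarrow> real" where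
  "L x = (let t = real (nat \<lfloor>1 / (1 - x)\<rfloor>) in
            (3 * t^2 - t - 2) / (t * (t + 1)) * x - 2 * (t - 1) / (t + 1))"

definition R :: "(real \<times> real) set" where
  "R = {(x, y). 0 \<le> x \<and> x < 1 \<and> 0 \<le> y \<and> y \<le> 1 \<and> y \<ge> L x}"

end

theory Submission
  imports Defs
begin

lemma pow_lip:
  fixes a b :: real
  assumes "0 \<le> a" "a \<le> 1" "0 \<le> b" "b \<le> 1"
  shows "\<bar>a^n - b^n\<bar> \<le> real n * \<bar>a - b\<bar>"
proof (induction n)
  case 0 then show ?case by simp
next
  case (Suc n)
  have e: "a^Suc n - b^Suc n = a*(a^n - b^n) + (a-b)*b^n" by (simp add: algebra_simps)
  have "\<bar>a*(a^n - b^n)\<bar> \<le> \<bar>a^n - b^n\<bar>"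
    using assms by (simp add: abs_mult mult_left_le_one_le)
  moreover have "\<bar>(a-b)*b^n\<bar> \<le> \<bar>a-b\<bar>"
    using assms by (simp add: abs_mult mult_left_le power_le_one)
  ultimately show ?case using Suc e by (simp add: algebra_simps)
qed

lemma prod_lip:
  fixes f h :: "nat \<Rightarrow> real"
  assumes "finite A" "\<forall>i\<in>A. 0 \<le> f i \<and> f i \<le> 1 \<and> 0 \<le> h i \<and> h i \<le> 1"
  shows "\<bar>prod f A - prod h A\<bar> \<le> (\<Sum>i\<in>A. \<bar>f i - h i\<bar>)"
  using assms
proof (induction A rule: finite_induct)
  case empty then show ?case by simp
next
  case (insert a A)
  have e: "prod f (insert a A) - prod h (insert a A) = f a * (prod f A - prod h A) + (f a - h a) * prod h A"
    using insert by (simp add: algebra_simps)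
  have p1: "0 \<le> prod h A" "prod h A \<le> 1" using insert
    by (auto intro: prod_nonneg prod_le_1)
  have "\<bar>f a * (prod f A - prod h A)\<bar> \<le> \<bar>prod f A - prod h A\<bar>"
    using insert by (simp add: abs_mult mult_left_le_one_le)
  moreover have "\<bar>(f a - h a) * prod h A\<bar> \<le> \<bar>f a - h a\<bar>"
    using p1 by (simp add: abs_mult mult_left_le)
  ultimately show ?case using insert e by simp
qed

lemma eval_lip:
  assumes "is_mpoly k c"
    and "\<forall>i<k. 0 \<le> x i \<and> x i \<le> 1 \<and> 0 \<le> z i \<and> z i \<le> 1"
  shows "\<bar>mpoly_eval k c x - mpoly_eval k c z\<bar>
         \<le> coeff_abs_sum c * real (mpoly_deg k c) * (\<Sum>i<k. \<bar>x i - z i\<bar>)"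
proof -
  have fin: "finite (coeff_supp c)" using assms(1) unfolding is_mpoly_def by blast
  let ?D = "\<Sum>i<k. \<bar>x i - z i\<bar>"
  have mono: "\<bar>(\<Prod>i<k. x i ^ m i) - (\<Prod>i<k. z i ^ m i)\<bar> \<le> real (mpoly_deg k c) * ?D"
    if m: "m \<in> coeff_supp c" for m
  proof -
    have degm: "(\<Sum>i<k. m i) \<le> mpoly_deg k c"
      unfolding mpoly_deg_def using fin m by (intro Max_ge) auto
    have "\<bar>(\<Prod>i<k. x i ^ m i) - (\<Prod>i<k. z i ^ m i)\<bar> \<le> (\<Sum>i<k. \<bar>x i ^ m i - z i ^ m i\<bar>)"
      using assms(2) by (intro prod_lip) (auto simp: power_le_one)
    also have "\<dots> \<le> (\<Sum>i<k. real (mpoly_deg k c) * \<bar>x i - z i\<bar>)"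
    proof (rule sum_mono)
      fix i assume i: "i \<in> {..<k}"
      have "m i \<le> (\<Sum>j<k. m j)" using i by (intro member_le_sum) auto
      then have "real (m i) \<le> real (mpoly_deg k c)" using degm by linarith
      then have "real (m i) * \<bar>x i - z i\<bar> \<le> real (mpoly_deg k c) * \<bar>x i - z i\<bar>"
        by (intro mult_right_mono) auto
      moreover have "\<bar>x i ^ m i - z i ^ m i\<bar> \<le> real (m i) * \<bar>x i - z i\<bar>"
        using assms(2) i by (intro pow_lip) auto
      ultimately show "\<bar>x i ^ m i - z i ^ m i\<bar> \<le> real (mpoly_deg k c) * \<bar>x i - z i\<bar>" by linarith
    qed
    also have "\<dots> = real (mpoly_deg k c) * ?D" by (simp add: sum_distrib_left)
    finally show ?thesis .
  qed
  have "mpoly_eval k c x - mpoly_eval k c z =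
        (\<Sum>m\<in>coeff_supp c. c m * ((\<Prod>i<k. x i ^ m i) - (\<Prod>i<k. z i ^ m i)))"
    unfolding mpoly_eval_def by (simp add: sum_subtractf algebra_simps)
  also have "\<bar>\<dots>\<bar> \<le> (\<Sum>m\<in>coeff_supp c. \<bar>c m * ((\<Prod>i<k. x i ^ m i) - (\<Prod>i<k. z i ^ m i))\<bar>)"
    by (rule sum_abs)
  also have "\<dots> \<le> (\<Sum>m\<in>coeff_supp c. \<bar>c m\<bar> * (real (mpoly_deg k c) * ?D))"
    using mono by (intro sum_mono) (simp add: abs_mult mult_left_mono)
  also have "\<dots> = coeff_abs_sum c * real (mpoly_deg k c) * ?D"
    unfolding coeff_abs_sum_def by (simp add: sum_distrib_right mult.assoc)
  finally show ?thesis .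
qed

lemma L_grid:
  assumes "n \<ge> (1::nat)"
  shows "L (1 - 1 / real n) = g (1 - 1 / real n)"
proof -
  have "1 / (1 - (1 - 1 / real n)) = real n" using assms by simp
  then have t: "real (nat \<lfloor>1 / (1 - (1 - 1 / real n))\<rfloor>) = real n" by simp
  have n0: "real n > 0" using assms by simp
  show ?thesis unfolding L_def Let_def t g_def using n0
    by (simp add: divide_simps power2_eq_square) (simp add: algebra_simps)
qed

lemma coord:
  assumes "(x, y) \<in> R"
  shows "\<exists>x'. (\<exists>n::nat. n \<ge> 1 \<and> x' = 1 - 1 / real n) \<and> 0 \<le> x' \<and> x' \<le> 1
             \<and> (1 - x)^6 * \<bar>x - x'\<bar> \<le> 100 * (y - g x)"
proof -
  have x: "0 \<le> x" "x < 1" and yL: "y \<ge> L x" using assms unfolding R_def by auto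
  define r where "r = 1 / (1 - x)"
  have r1: "r \<ge> 1" unfolding r_def using x by (simp add: field_simps)
  define t where "t = nat \<lfloor>r\<rfloor>"
  have tr: "real t = of_int \<lfloor>r\<rfloor>" unfolding t_def using r1 by simp
  have t1: "t \<ge> 1" unfolding t_def using r1 by linarith
  have tle: "real t \<le> r" and rlt: "r < real t + 1" using tr by linarith+
  define a where "a = 1 - 1 / real t"
  define b where "b = 1 - 1 / (real t + 1)"
  have ax: "a \<le> x" using tle x t1 unfolding a_def r_def by (simp add: field_simps)
  have xb: "x < b" using rlt x t1 unfolding b_def r_def by (simp add: field_simps)
  have omx: "1 - x \<le> 1 / real t" using tle x t1 unfolding r_def by (simp add: field_simps)
  have Lx: "L x = (3 * real t^2 - real t - 2) / (real t * (real t + 1)) * x - 2 * (real t - 1) / (real t + 1)"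
    unfolding L_def Let_def r_def[symmetric] t_def by simp
  have Lg: "L x - g x = 2 * (x - a) * (b - x)"
  proof -
    have t0: "real t > 0" using t1 by simp
    show ?thesis unfolding Lx g_def a_def b_def using t0
      by (simp add: divide_simps power2_eq_square) (simp add: algebra_simps)
  qed
  have ba: "b - a = 1 / (real t * (real t + 1))" unfolding a_def b_def using t1
    by (simp add: field_simps)
  define x' where "x' = (if x - a \<le> b - x then a else b)"
  define d where "d = \<bar>x - x'\<bar>"
  have d: "d = min (x - a) (b - x)" unfolding d_def x'_def using ax xb by auto
  have "d * (b - a) \<le> 2 * (x - a) * (b - x)"
  proof (cases "x - a \<le> b - x")
    case True
    then have "d = x - a" using d by simp
    moreover have "b - a \<le> 2 * (b - x)" using True by simp
    moreover have "(x - a) * (b - a) \<le> (x - a) * (2 * (b - x))"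
      using ax \<open>b - a \<le> 2 * (b - x)\<close> by (intro mult_left_mono) auto
    moreover have "(x - a) * (2 * (b - x)) = 2 * (x - a) * (b - x)" by (simp add: algebra_simps)
    ultimately show ?thesis by (metis mult.commute)
  next
    case False
    then have "d = b - x" using d by simp
    moreover have "b - a \<le> 2 * (x - a)" using False by simp
    ultimately show ?thesis using xb
      by (metis mult.commute mult.left_commute mult_left_mono diff_ge_0_iff_ge less_imp_le)
  qed
  then have dy: "d / (real t * (real t + 1)) \<le> y - g x" using Lg ba yL by simp
  have d0: "d \<ge> 0" unfolding d_def by simp
  have p6: "(1 - x)^6 \<le> 1 / (real t)^2"
  proof -
    have "(1 - x)^6 \<le> (1 - x)^2"
      using x by (intro power_decreasing) auto
    also have "\<dots> \<le> (1 / real t)^2" using omx x by (intro power_mono) auto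
    finally show ?thesis by (simp add: power_divide)
  qed
  have tt: "1 / (real t)^2 \<le> 100 / (real t * (real t + 1))"
  proof -
    have t0: "real t \<ge> 1" using t1 by simp
    then have "real t * (real t + 1) \<le> 100 * (real t)^2" by (simp add: power2_eq_square algebra_simps)
    then show ?thesis using t0 by (simp add: divide_simps)
  qed
  have "(1 - x)^6 * d \<le> 100 / (real t * (real t + 1)) * d"
    using p6 tt d0 by (intro mult_right_mono) auto
  also have "\<dots> = 100 * (d / (real t * (real t + 1)))" by simp
  also have "\<dots> \<le> 100 * (y - g x)" using dy by simp
  finally have main: "(1 - x)^6 * \<bar>x - x'\<bar> \<le> 100 * (y - g x)" unfolding d_def .
  have grid: "\<exists>n::nat. n \<ge> 1 \<and> x' = 1 - 1 / real n"
    unfolding x'_def a_def b_def using t1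
    by (cases "x - a \<le> b - x") (auto intro!: exI[of _ t] exI[of _ "t+1"] simp: a_def b_def)
  have "0 \<le> x'" "x' \<le> 1" unfolding x'_def a_def b_def using t1 by (auto simp: field_simps)
  then show ?thesis using grid main by blast
qed

theorem lemma5p3:
  fixes k :: nat and c :: "(nat \<Rightarrow> nat) \<Rightarrow> real"
  assumes "is_mpoly k c"
  shows "(\<exists>x y :: nat \<Rightarrow> real. (\<forall>i<k. (x i, y i) \<in> R) \<and>
            mpoly_eval k c x * (\<Prod>i<k. (1 - x i) ^ 6)
            + (100 * real (mpoly_deg k c) * coeff_abs_sum c) * (\<Sum>i<k. y i - g (x i)) < 0)
         \<longleftrightarrow>
         (\<exists>x :: nat \<Rightarrow> real. (\<forall>i<k. \<exists>n::nat. n \<ge> 1 \<and> x i = 1 - 1 / real n) \<and>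
            mpoly_eval k c x < 0)"
proof
  assume "\<exists>x y :: nat \<Rightarrow> real. (\<forall>i<k. (x i, y i) \<in> R) \<and>
            mpoly_eval k c x * (\<Prod>i<k. (1 - x i) ^ 6)
            + (100 * real (mpoly_deg k c) * coeff_abs_sum c) * (\<Sum>i<k. y i - g (x i)) < 0"
  then obtain x y where xyR: "\<forall>i<k. (x i, y i) \<in> R" and
    q: "mpoly_eval k c x * (\<Prod>i<k. (1 - x i) ^ 6)
            + (100 * real (mpoly_deg k c) * coeff_abs_sum c) * (\<Sum>i<k. y i - g (x i)) < 0"
    by blast
  have "\<forall>i<k. \<exists>x'. (\<exists>n::nat. n \<ge> 1 \<and> x' = 1 - 1 / real n) \<and> 0 \<le> x' \<and> x' \<le> 1
             \<and> (1 - x i)^6 * \<bar>x i - x'\<bar> \<le> 100 * (y i - g (x i))"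
    using xyR coord by blast
  then obtain z where z: "\<forall>i<k. (\<exists>n::nat. n \<ge> 1 \<and> z i = 1 - 1 / real n) \<and> 0 \<le> z i \<and> z i \<le> 1
             \<and> (1 - x i)^6 * \<bar>x i - z i\<bar> \<le> 100 * (y i - g (x i))"
    by metis
  show "\<exists>x :: nat \<Rightarrow> real. (\<forall>i<k. \<exists>n::nat. n \<ge> 1 \<and> x i = 1 - 1 / real n) \<and>
            mpoly_eval k c x < 0"
  proof (rule ccontr)
    assume "\<not> ?thesis"
    then have pz: "mpoly_eval k c z \<ge> 0" using z by force
    have x01: "\<forall>i<k. 0 \<le> x i \<and> x i < 1" using xyR unfolding R_def by auto
    define C where "C = coeff_abs_sum c * real (mpoly_deg k c)"
    define P where "P = (\<Prod>i<k. (1 - x i) ^ 6)"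
    have C0: "C \<ge> 0" unfolding C_def coeff_abs_sum_def by (simp add: sum_nonneg)
    have P0: "P \<ge> 0" unfolding P_def using x01 by (intro prod_nonneg) auto
    have lip: "\<bar>mpoly_eval k c x - mpoly_eval k c z\<bar> \<le> C * (\<Sum>i<k. \<bar>x i - z i\<bar>)"
      unfolding C_def using assms x01 z by (intro eval_lip) auto
    have px: "mpoly_eval k c x \<ge> - (C * (\<Sum>i<k. \<bar>x i - z i\<bar>))" using lip pz by linarith
    have Pi: "P \<le> (1 - x i)^6" if i: "i < k" for i
    proof -
      have "P = (1 - x i)^6 * (\<Prod>j\<in>{..<k} - {i}. (1 - x j)^6)"
        unfolding P_def using i by (subst prod.remove[of _ i]) auto
      moreover have "(\<Prod>j\<in>{..<k} - {i}. (1 - x j)^6) \<le> 1"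
        using x01 by (intro prod_le_1) (auto simp: power_le_one)
      moreover have "(1 - x i)^6 \<ge> 0" using x01 i by simp
      ultimately show ?thesis by (simp add: mult_left_le)
    qed
    have "mpoly_eval k c x * P \<ge> - (C * (\<Sum>i<k. \<bar>x i - z i\<bar>)) * P"
      using px P0 by (intro mult_right_mono) auto
    moreover have "C * (\<Sum>i<k. \<bar>x i - z i\<bar>) * P = (\<Sum>i<k. C * (\<bar>x i - z i\<bar> * P))"
      by (simp add: sum_distrib_left sum_distrib_right mult.assoc)
    moreover have "(\<Sum>i<k. C * (\<bar>x i - z i\<bar> * P)) \<le> (\<Sum>i<k. C * (100 * (y i - g (x i))))"
    proof (rule sum_mono)
      fix i assume i: "i \<in> {..<k}"
      have "\<bar>x i - z i\<bar> * P \<le> \<bar>x i - z i\<bar> * (1 - x i)^6"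
        using Pi i by (intro mult_left_mono) auto
      also have "\<dots> \<le> 100 * (y i - g (x i))" using z i by (simp add: mult.commute)
      finally show "C * (\<bar>x i - z i\<bar> * P) \<le> C * (100 * (y i - g (x i)))"
        using C0 by (intro mult_left_mono) auto
    qed
    moreover have "(\<Sum>i<k. C * (100 * (y i - g (x i)))) =
        (100 * real (mpoly_deg k c) * coeff_abs_sum c) * (\<Sum>i<k. y i - g (x i))"
      unfolding C_def by (simp add: sum_distrib_left mult_ac)
    moreover have "- (C * (\<Sum>i<k. \<bar>x i - z i\<bar>)) * P = - (C * (\<Sum>i<k. \<bar>x i - z i\<bar>) * P)" by simp
    ultimately show False using q unfolding P_def by linarith
  qed
next
  assume "\<exists>x :: nat \<Rightarrow> real. (\<forall>i<k. \<exists>n::nat. n \<ge> 1 \<and> x i = 1 - 1 / real n) \<and>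
            mpoly_eval k c x < 0"
  then obtain x where xg: "\<forall>i<k. \<exists>n::nat. n \<ge> 1 \<and> x i = 1 - 1 / real n"
    and p: "mpoly_eval k c x < 0" by blast
  define y where "y = (\<lambda>i. g (x i))"
  have inR: "(x i, y i) \<in> R" if i: "i < k" for i
  proof -
    obtain n :: nat where n: "n \<ge> 1" "x i = 1 - 1 / real n" using xg i by blast
    have "0 \<le> 1 - 1 / real n" "1 - 1 / real n < 1" using n(1) by (auto simp: field_simps)
    moreover have "0 \<le> g (1 - 1 / real n)"
    proof (cases "n = 1")
      case True then show ?thesis by (simp add: g_def)
    next
      case False
      then have n2: "real n \<ge> 2" using n(1) by simp
      then have "0 \<le> real n * (real n - 1) * (real n - 2)" by simp
      then show ?thesis using n2 unfolding g_def by (simp add: field_simps power2_eq_square)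
    qed
    moreover have "g (1 - 1 / real n) \<le> 1"
      using n(1) unfolding g_def by (simp add: field_simps power2_eq_square)
    ultimately show ?thesis unfolding R_def y_def using n L_grid[OF n(1)] by auto
  qed
  have P: "(\<Prod>i<k. (1 - x i) ^ 6) > 0"
  proof (intro prod_pos ballI)
    fix i assume "i \<in> {..<k}"
    then obtain n :: nat where n: "n \<ge> 1" "x i = 1 - 1 / real n" using xg by blast
    then show "(1 - x i)^6 > 0" by simp
  qed
  have "mpoly_eval k c x * (\<Prod>i<k. (1 - x i) ^ 6)
          + (100 * real (mpoly_deg k c) * coeff_abs_sum c) * (\<Sum>i<k. y i - g (x i)) < 0"
    using p P unfolding y_def by (simp add: mult_neg_pos)
  then show "\<exists>x y :: nat \<Rightarrow> real. (\<forall>i<k. (x i, y i) \<in> R) \<and>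
            mpoly_eval k c x * (\<Prod>i<k. (1 - x i) ^ 6)
            + (100 * real (mpoly_deg k c) * coeff_abs_sum c) * (\<Sum>i<k. y i - g (x i)) < 0"
    using inR by blast
qed

end
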